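(* There exist constants $c>0$ and $n_0$ with the following property. For any integer $n\ge n_0$, any integer $B\ge1$, any $\eta\in(0,1/2)$ and any $\epsilon\in(0,1)$, there exist a sequence of $n\times n$ matrices $(A(k))_{k\ge0}$ and an initial vector $x(0)\in\mathbb{R}^n$ such that: each $A(k)$ is doubly stochastic with positive diagonal entries and all its positive entries are at least $\eta$; for every integer $k\ge0$ the directed graph $(N,\mathcal{E}(A(kB))\cup\cdots\cup\mathcal{E}(A((k+1)B-1)))$ is strongly connected; and, with $x(k+1)=A(k)x(k)$, whenever $V(x(k))/V(x(0))\le\epsilon$ we have \[k\ge c\,\frac{n^2}{\eta}\,B\log\frac1\epsilon.\]
   Context: $N=\{1,\dots,n\}$. A matrix is doubly stochastic if it is nonnegative with all row and column sums equal to $1$. For a matrix $A=[a_{ij}]$, $\mathcal{E}(A)$ is the set of directed edges $(j,i)$ (including self-edges) with $a_{ij}>0$. For $x\in\mathbb{R}^n$, $\bar x=\frac1n\sum_ix_i$ and $V(x)=\sum_i(x_i-\bar x)^2$. *)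

theory Defs
  imports Complex_Main
begin

text \<open>Matrices of size n are functions nat => nat => real, indices in {..<n}
  (0-based rendering of N = {1..n}); vectors are nat => real.\<close>

definition doubly_stochastic :: "nat \<Rightarrow> (nat \<Rightarrow> nat \<Rightarrow> real) \<Rightarrow> bool" where
  "doubly_stochastic n A \<longleftrightarrow>
     (\<forall>i<n. \<forall>j<n. A i j \<ge> 0) \<and>
     (\<forall>i<n. (\<Sum>j<n. A i j) = 1) \<and>
     (\<forall>j<n. (\<Sum>i<n. A i j) = 1)"

definition edges :: "nat \<Rightarrow> (nat \<Rightarrow> nat \<Rightarrow> real) \<Rightarrow> (nat \<times> nat) set" where
  "edges n A = {(j, i). i < n \<and> j < n \<and> A i j > 0}"

definition strongly_connected :: "nat \<Rightarrow> (nat \<times> nat) set \<Rightarrow> bool" where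
  "strongly_connected n E \<longleftrightarrow> (\<forall>i<n. \<forall>j<n. (i, j) \<in> E\<^sup>*)"

definition mean :: "nat \<Rightarrow> (nat \<Rightarrow> real) \<Rightarrow> real" where
  "mean n x = (\<Sum>i<n. x i) / real n"

definition V :: "nat \<Rightarrow> (nat \<Rightarrow> real) \<Rightarrow> real" where
  "V n x = (\<Sum>i<n. (x i - mean n x)\<^sup>2)"

fun traj :: "nat \<Rightarrow> (nat \<Rightarrow> nat \<Rightarrow> nat \<Rightarrow> real) \<Rightarrow> (nat \<Rightarrow> real) \<Rightarrow> nat \<Rightarrow> (nat \<Rightarrow> real)" where
  "traj n A x0 0 = x0"
| "traj n A x0 (Suc k) = (\<lambda>i. \<Sum>j<n. A k i j * traj n A x0 k j)"

end

theory Submission imports Defs begin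

definition om :: "nat \<Rightarrow> complex" where "om n = cis (2*pi/n)"

lemma om_pow_n: "n > 0 \<Longrightarrow> om n ^ n = 1"
  by (simp add: om_def DeMoivre)

lemma om_norm[simp]: "norm (om n) = 1" by (simp add: om_def)

lemma cis_ne1: assumes "0 < x" "x < 2*pi" shows "cis x \<noteq> 1"
proof
  assume "cis x = 1"
  then have "cos x = 1" by (metis cis.simps(1) one_complex.simps(1))
  then obtain m::int where m: "x = real_of_int m * 2 * pi" using cos_one_2pi_int by blast
  have "0 < real_of_int m" using assms(1) m pi_gt_zero by (simp add: zero_less_mult_iff)
  moreover have "real_of_int m < 1" using assms(2) m pi_gt_zero by simp
  ultimately show False by simp
qed

lemma om_sum: assumes "n \<ge> 2" shows "(\<Sum>j<n. om n ^ j) = 0"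
proof -
  have "om n \<noteq> 1" unfolding om_def
    apply (rule cis_ne1) using assms pi_gt_zero by (auto simp: field_simps)
  then show ?thesis using om_pow_n assms by (simp add: geometric_sum)
qed

lemma om_sum2: assumes "n \<ge> 3" shows "(\<Sum>j<n. (om n ^ j)^2) = 0"
proof -
  have e: "om n ^ 2 = cis (4*pi/n)" unfolding om_def DeMoivre by simp
  have "om n ^ 2 \<noteq> 1" unfolding e
    apply (rule cis_ne1) using assms pi_gt_zero by (auto simp: field_simps)
  moreover have "(om n ^ 2) ^ n = 1" using om_pow_n[of n] assms
    by (metis power_mult power_mult_distrib mult.commute power_one not_gr0 not_numeral_le_zero le_zero_eq)
  ultimately have "(\<Sum>j<n. (om n ^ 2)^j) = 0" by (simp add: geometric_sum)
  then show ?thesis by (simp add: power_mult[symmetric] mult.commute)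
qed


lemma re_sq: "(Re w)^2 = (Re (w^2) + (cmod w)^2) / 2"
proof -
  have "Re (w^2) = (Re w)^2 - (Im w)^2" by (simp add: power2_eq_square)
  then show ?thesis by (simp add: cmod_power2)
qed

lemma V_wave: assumes n: "n \<ge> 3" and x: "\<And>i. i < n \<Longrightarrow> x i = Re (z * om n ^ i)"
  shows "V n x = real n * (cmod z)^2 / 2"
proof -
  have "(\<Sum>i<n. x i) = (\<Sum>i<n. Re (z * om n ^ i))" using x by simp
  also have "\<dots> = Re (z * (\<Sum>i<n. om n ^ i))" by (simp add: sum_distrib_left)
  also have "\<dots> = 0" using om_sum[of n] n by simp
  finally have m: "mean n x = 0" by (simp add: mean_def)
  have "V n x = (\<Sum>i<n. (Re (z * om n ^ i))^2)" using x by (simp add: V_def m)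
  also have "\<dots> = (\<Sum>i<n. (Re ((z * om n ^ i)^2) + (cmod z)^2) / 2)"
    by (rule sum.cong[OF refl], subst re_sq) (simp add: norm_mult norm_power)
  also have "\<dots> = (Re (z^2 * (\<Sum>i<n. (om n ^ i)^2)) + real n * (cmod z)^2) / 2"
    by (simp add: sum_divide_distrib[symmetric] sum.distrib sum_distrib_left power_mult_distrib)
  also have "\<dots> = real n * (cmod z)^2 / 2" using om_sum2[OF n] by simp
  finally show ?thesis .
qed

definition Mx :: "nat \<Rightarrow> real \<Rightarrow> nat \<Rightarrow> nat \<Rightarrow> real" where
  "Mx n \<eta> i j = (if i = j then 1-\<eta> else 0) + (if j = (i+n-1) mod n then \<eta> else 0)"

definition mu :: "nat \<Rightarrow> real \<Rightarrow> complex" where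
  "mu n \<eta> = complex_of_real (1-\<eta>) + complex_of_real \<eta> * cnj (om n)"

lemma om_pred: assumes "n \<ge> 1" shows "om n ^ (n-1) = cnj (om n)"
proof -
  have "om n * om n ^ (n-1) = om n ^ Suc (n-1)" by simp
  also have "Suc (n-1) = n" using assms by simp
  finally have h1: "om n * om n ^ (n-1) = 1" using om_pow_n[of n] assms by simp
  have h2: "cnj (om n) * om n = 1"
    using complex_norm_square[of "om n"] by (simp add: mult.commute)
  have "om n ^ (n-1) = (cnj (om n) * om n) * om n ^ (n-1)" using h2 by simp
  also have "\<dots> = cnj (om n) * (om n * om n ^ (n-1))" by (simp only: mult.assoc)
  also have "\<dots> = cnj (om n)" using h1 by simp
  finally show ?thesis .
qed

lemma Mx_step: assumes n: "n \<ge> 3" and i: "i < n"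
  shows "(\<Sum>j<n. Mx n \<eta> i j * Re (w * om n ^ j)) = Re (w * mu n \<eta> * om n ^ i)"
proof -
  let ?p = "(i+n-1) mod n"
  have p: "?p < n" using n by simp
  have "(\<Sum>j<n. Mx n \<eta> i j * Re (w * om n ^ j)) =
     (\<Sum>j<n. (if i = j then (1-\<eta>) * Re (w * om n ^ j) else 0)) + (\<Sum>j<n. (if j = ?p then \<eta> * Re (w * om n ^ j) else 0))"
    unfolding Mx_def sum.distrib[symmetric] by (rule sum.cong) (auto simp: distrib_right)
  also have "\<dots> = (1-\<eta>) * Re (w * om n ^ i) + \<eta> * Re (w * om n ^ ?p)"
  proof -
    have "i \<noteq> ?p"
    proof (cases i)
      case 0 then show ?thesis using n by simp
    next
      case (Suc l) then have "?p = l" using i by (simp add: add.commute)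
      then show ?thesis using Suc by simp
    qed
    then show ?thesis using i p by (simp add: sum.delta)
  qed
  also have "om n ^ ?p = om n ^ i * cnj (om n)"
  proof -
    have "om n ^ (i+n-1) = om n ^ (?p + n * ((i+n-1) div n))" by simp
    also have "\<dots> = om n ^ ?p * (om n ^ n) ^ ((i+n-1) div n)" by (simp only: power_add power_mult)
    finally have fin: "om n ^ (i+n-1) = om n ^ ?p * (om n ^ n) ^ ((i+n-1) div n)" .
    have op: "om n ^ (n-1) = cnj (om n)" using n by (intro om_pred) simp
    from fin have "om n ^ ?p = om n ^ (i + (n-1))" using om_pow_n[of n] n by simp
    also have "\<dots> = om n ^ i * om n ^ (n-1)" by (rule power_add)
    also have "\<dots> = om n ^ i * cnj (om n)" by (simp only: op)
    finally show ?thesis .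
  qed
  finally show ?thesis unfolding mu_def by (simp add: algebra_simps)
qed


definition pm :: "nat \<Rightarrow> nat \<Rightarrow> nat" where "pm n i = (if i = 0 then n - 1 else i - 1)"
definition sc :: "nat \<Rightarrow> nat \<Rightarrow> nat" where "sc n j = (if j = n - 1 then 0 else j + 1)"

lemma pred_mod: assumes "i < n" shows "(i+n-1) mod n = pm n i"
proof (cases i)
  case 0 then show ?thesis using assms by (simp add: pm_def)
next
  case (Suc l) then have "i + n - 1 = l + n" by simp
  then show ?thesis using Suc assms by (simp add: pm_def)
qed

lemma pm_sc: assumes "i < n" "j < n" shows "(j = pm n i) \<longleftrightarrow> (i = sc n j)"
  using assms unfolding pm_def sc_def by auto

lemma pm_lt: "i < n \<Longrightarrow> pm n i < n" by (auto simp: pm_def)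
lemma sc_lt: "j < n \<Longrightarrow> sc n j < n" by (auto simp: sc_def)
lemma pm_ne: "i < n \<Longrightarrow> n \<ge> 2 \<Longrightarrow> pm n i \<noteq> i" by (auto simp: pm_def)

lemma Mx_alt: "i < n \<Longrightarrow> Mx n \<eta> i j = (if i = j then 1-\<eta> else 0) + (if j = pm n i then \<eta> else 0)"
  using pred_mod[of i n] by (simp add: Mx_def)

definition Idm :: "nat \<Rightarrow> nat \<Rightarrow> real" where "Idm i j = (if i = j then 1 else 0)"

definition Am :: "nat \<Rightarrow> nat \<Rightarrow> real \<Rightarrow> nat \<Rightarrow> nat \<Rightarrow> nat \<Rightarrow> real" where
  "Am n B \<eta> k = (if k mod B = B - 1 then Mx n \<eta> else Idm)"

lemma Idm_good: "doubly_stochastic n Idm \<and> (\<forall>i<n. Idm i i > 0) \<and>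
   (\<forall>i<n. \<forall>j<n. Idm i j > 0 \<longrightarrow> Idm i j \<ge> \<eta>)" if "\<eta> < 1/2"
  using that by (auto simp: doubly_stochastic_def Idm_def sum.delta sum.delta')

lemma Mx_good: assumes n: "n \<ge> 3" and e: "0 < \<eta>" "\<eta> < 1/2"
  shows "doubly_stochastic n (Mx n \<eta>) \<and> (\<forall>i<n. Mx n \<eta> i i > 0) \<and>
   (\<forall>i<n. \<forall>j<n. Mx n \<eta> i j > 0 \<longrightarrow> Mx n \<eta> i j \<ge> \<eta>)"
proof -
  have rows: "(\<Sum>j<n. Mx n \<eta> i j) = 1" if "i < n" for i
    using that pm_lt[OF that] by (simp add: Mx_alt sum.distrib)
  have cols: "(\<Sum>i<n. Mx n \<eta> i j) = 1" if "j < n" for j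
  proof -
    have "(\<Sum>i<n. Mx n \<eta> i j) = (\<Sum>i<n. (if i = j then 1-\<eta> else 0) + (if i = sc n j then \<eta> else 0))"
      by (rule sum.cong[OF refl]) (simp add: Mx_alt pm_sc that)
    also have "\<dots> = 1" using that sc_lt[OF that] by (simp add: sum.distrib)
    finally show ?thesis .
  qed
  have ent: "Mx n \<eta> i j = 0 \<or> Mx n \<eta> i j = \<eta> \<or> Mx n \<eta> i j = 1 - \<eta>" if "i < n" for i j
    using pm_ne[OF that] n that by (auto simp: Mx_alt)
  show ?thesis unfolding doubly_stochastic_def
    using rows cols ent e pm_ne n by (auto simp: Mx_alt)
qed


lemma Mx_sc: assumes n: "n \<ge> 3" and e: "0 < \<eta>" "\<eta> < 1/2"
  shows "strongly_connected n (edges n (Mx n \<eta>))"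
proof -
  let ?E = "edges n (Mx n \<eta>)"
  have ed: "(l, sc n l) \<in> ?E" if "l < n" for l
  proof -
    have "l = pm n (sc n l)" using pm_sc[OF sc_lt[OF that] that] by simp
    moreover have "sc n l \<noteq> l" using pm_ne[OF sc_lt[OF that]] n calculation by auto
    ultimately have "Mx n \<eta> (sc n l) l = \<eta>" using sc_lt[OF that] by (simp add: Mx_alt)
    then show ?thesis using that sc_lt[OF that] e by (simp add: edges_def)
  qed
  have up: "(i, i + d) \<in> ?E\<^sup>*" if "i + d < n" for i d
    using that
  proof (induction d)
    case 0 then show ?case by simp
  next
    case (Suc d)
    then have "(i, i+d) \<in> ?E\<^sup>*" by simp
    moreover have "sc n (i+d) = i + Suc d" using Suc.prems by (simp add: sc_def)
    then have "(i+d, i + Suc d) \<in> ?E" using ed[of "i+d"] Suc.prems by simp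
    ultimately show ?case by (rule rtrancl_into_rtrancl)
  qed
  have le: "(i, j) \<in> ?E\<^sup>*" if "i \<le> j" "j < n" for i j
    using up[of i "j - i"] that by simp
  show ?thesis unfolding strongly_connected_def
  proof (intro allI impI)
    fix i j assume i: "i < n" and j: "j < n"
    show "(i, j) \<in> ?E\<^sup>*"
    proof (cases "i \<le> j")
      case True then show ?thesis using le j by blast
    next
      case False
      have "(i, n-1) \<in> ?E\<^sup>*" using le i by simp
      moreover have "(n-1, 0) \<in> ?E" using ed[of "n-1"] n by (simp add: sc_def)
      moreover have "(0, j) \<in> ?E\<^sup>*" using le j by simp
      ultimately show ?thesis by (meson rtrancl_into_rtrancl rtrancl_trans)
    qed
  qed
qed

lemma Idm_sum: "i < n \<Longrightarrow> (\<Sum>j<n. Idm i j * f j) = f i"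
proof -
  assume i: "i < n"
  have "(\<Sum>j<n. Idm i j * f j) = (\<Sum>j<n. if i = j then f j else 0)"
    by (rule sum.cong) (auto simp: Idm_def)
  also have "\<dots> = f i" using i by simp
  finally show ?thesis .
qed

lemma traj_wave: assumes n: "n \<ge> 3" and B: "B \<ge> 1"
  shows "\<forall>i<n. traj n (Am n B \<eta>) (\<lambda>i. Re (om n ^ i)) k i = Re (mu n \<eta> ^ (k div B) * om n ^ i)"
proof (induction k)
  case 0 then show ?case by simp
next
  case (Suc k)
  show ?case
  proof (intro allI impI)
    fix i assume i: "i < n"
    have IH: "traj n (Am n B \<eta>) (\<lambda>i. Re (om n ^ i)) k j = Re (mu n \<eta> ^ (k div B) * om n ^ j)" if "j < n" for j
      using Suc that by blast
    show "traj n (Am n B \<eta>) (\<lambda>i. Re (om n ^ i)) (Suc k) i = Re (mu n \<eta> ^ (Suc k div B) * om n ^ i)"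
    proof (cases "k mod B = B - 1")
      case True
      then have "Suc k mod B = 0" using B by (simp add: mod_Suc)
      then have d: "Suc k div B = Suc (k div B)" by (simp add: div_Suc)
      have "traj n (Am n B \<eta>) (\<lambda>i. Re (om n ^ i)) (Suc k) i = (\<Sum>j<n. Mx n \<eta> i j * Re (mu n \<eta> ^ (k div B) * om n ^ j))"
        using True IH by (simp add: Am_def)
      also have "\<dots> = Re (mu n \<eta> ^ (k div B) * mu n \<eta> * om n ^ i)" by (rule Mx_step[OF n i])
      finally show ?thesis using d by (simp add: mult.commute)
    next
      case False
      then have "Suc k mod B \<noteq> 0" using B by (auto simp: mod_Suc)
      then have d: "Suc k div B = k div B" by (simp add: div_Suc)
      have "traj n (Am n B \<eta>) (\<lambda>i. Re (om n ^ i)) (Suc k) i = (\<Sum>j<n. Idm i j * Re (mu n \<eta> ^ (k div B) * om n ^ j))"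
        using False IH by (simp add: Am_def)
      also have "\<dots> = Re (mu n \<eta> ^ (k div B) * om n ^ i)" using i by (rule Idm_sum)
      finally show ?thesis using d by simp
    qed
  qed
qed

lemma one_minus_cos: "1 - cos (x::real) \<le> x^2 / 2"
proof -
  have "cos x = 1 - 2 * sin (x/2) ^ 2" using cos_double_sin[of "x/2"] by simp
  moreover have "sin (x/2) ^ 2 \<le> (x/2)^2"
    using abs_sin_x_le_abs_x[of "x/2"] by (metis abs_ge_zero power2_abs power_mono)
  ultimately show ?thesis by (simp add: power_divide)
qed

lemma alg_norm: fixes s c e :: real assumes "s^2 + c^2 = 1"
  shows "(1-e+e*c)^2 + (e*s)^2 = 1 - 2*e*(1-e)*(1-c)"
proof -
  have "(e*s)^2 = e^2*(1-c^2)" using assms by (simp add: power_mult_distrib)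
  then show ?thesis by (simp add: power2_eq_square algebra_simps)
qed

lemma mu_norm: "(cmod (mu n \<eta>))^2 = 1 - 2*\<eta>*(1-\<eta>)*(1 - cos (2*pi/n))"
proof -
  have "(cmod (mu n \<eta>))^2 = (1-\<eta> + \<eta> * cos (2*pi/n))^2 + (\<eta> * sin (2*pi/n))^2"
    by (simp add: cmod_power2 mu_def om_def)
  also have "\<dots> = 1 - 2*\<eta>*(1-\<eta>)*(1 - cos (2*pi/n))"
    by (rule alg_norm) (rule sin_cos_squared_add)
  finally show ?thesis .
qed


lemma final_ineq:
  fixes a \<eta> \<epsilon> :: real and n m B k :: nat
  assumes a0: "0 \<le> a" and a1: "a \<le> 4*pi^2*\<eta>/(real n)^2" and n: "n \<ge> 9"
    and e: "0 < \<eta>" "\<eta> < 1/2" and ep: "0 < \<epsilon>" "\<epsilon> < 1"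
    and q: "(1 - a)^m \<le> \<epsilon>" and k: "B*m \<le> k"
  shows "real k \<ge> 1/(8*pi^2) * (real n)^2/\<eta> * real B * ln (1/\<epsilon>)"
proof -
  have rn: "(9::real) \<le> real n" using n by simp
  have n2': "(9::real)^2 \<le> (real n)^2" by (rule power_mono[OF rn]) simp
  then have n2: "81 \<le> (real n)^2" by simp
  have p4: "pi^2 \<le> 4^2" by (rule power_mono) (use pi_less_4 pi_gt_zero in auto)
  have "pi^2 * \<eta> \<le> 4^2 * (1/2)" by (rule mult_mono) (use p4 e in auto)
  then have "4*pi^2*\<eta> \<le> 32" by (simp add: mult.commute)
  then have "4*pi^2*\<eta>/(real n)^2 \<le> 32/81"
    using frac_le[of 32 "4*pi^2*\<eta>" 81 "(real n)^2"] n2 by simp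
  then have ah: "a \<le> 1/2" using a1 by simp
  define q where "q = 1 - a"
  have qp: "q \<ge> 1/2" using ah by (simp add: q_def)
  have qpos: "0 < q" using qp by simp
  have "ln (q^m) \<le> ln \<epsilon>" using q qpos ep by (simp add: q_def)
  moreover have "ln (q^m) = real m * ln q" by (rule ln_realpow)
  ultimately have l0: "real m * ln q \<le> ln \<epsilon>" by simp
  have li: "ln (1/q) = - ln q" "ln (1/\<epsilon>) = - ln \<epsilon>" using qpos ep by (simp_all add: ln_div)
  have l1: "ln (1/\<epsilon>) \<le> real m * ln (1/q)" using l0 li by simp
  have "ln (1/q) \<le> 1/q - 1" using qpos by (intro ln_le_minus_one) simp
  also have "\<dots> = a / q" using qpos by (simp add: field_simps q_def)
  also have "\<dots> \<le> a / (1/2)" by (rule divide_left_mono) (use a0 qp in auto)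
  also have "\<dots> \<le> 2 * (4*pi^2*\<eta>/(real n)^2)" using a1 by simp
  finally have l2: "ln (1/q) \<le> 2 * (4*pi^2*\<eta>/(real n)^2)" .
  have "real m * ln (1/q) \<le> real m * (2 * (4*pi^2*\<eta>/(real n)^2))"
    by (rule mult_left_mono[OF l2]) simp
  with l1 have "ln (1/\<epsilon>) \<le> real m * (2 * (4*pi^2*\<eta>/(real n)^2))" by linarith
  also have "\<dots> = 8*pi^2*\<eta>*real m/(real n)^2" by simp
  finally have l3: "ln (1/\<epsilon>) \<le> 8*pi^2*\<eta>*real m/(real n)^2" .
  have np: "0 < (real n)^2" using n by simp
  have L: "ln (1/\<epsilon>) * (real n)^2 \<le> 8*pi^2*\<eta>*real m"
    using l3 np by (simp add: pos_le_divide_eq)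
  have "1/(8*pi^2) * (real n)^2/\<eta> * real B * ln (1/\<epsilon>) = real B * (ln (1/\<epsilon>) * (real n)^2) / (8*pi^2*\<eta>)"
    by (simp add: field_simps)
  also have "\<dots> \<le> real B * (8*pi^2*\<eta>*real m) / (8*pi^2*\<eta>)"
    by (intro divide_right_mono mult_left_mono L) (use e pi_gt_zero in auto)
  also have "\<dots> = real (B*m)" using e pi_gt_zero by simp
  also have "\<dots> \<le> real k" using k by (simp only: of_nat_le_iff)
  finally show ?thesis .
qed


theorem proposition2:
  shows "\<exists>(c::real) > 0. \<exists>n0::nat. \<forall>n B (\<eta>::real) (\<epsilon>::real).
     n \<ge> n0 \<and> B \<ge> 1 \<and> 0 < \<eta> \<and> \<eta> < 1/2 \<and> 0 < \<epsilon> \<and> \<epsilon> < 1 \<longrightarrow>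
     (\<exists>(A::nat \<Rightarrow> nat \<Rightarrow> nat \<Rightarrow> real) (x0::nat \<Rightarrow> real).
        (\<forall>k. doubly_stochastic n (A k) \<and> (\<forall>i<n. A k i i > 0) \<and>
             (\<forall>i<n. \<forall>j<n. A k i j > 0 \<longrightarrow> A k i j \<ge> \<eta>)) \<and>
        (\<forall>k. strongly_connected n (\<Union>t\<in>{k*B..<(k+1)*B}. edges n (A t))) \<and>
        (\<forall>k. V n (traj n A x0 k) / V n x0 \<le> \<epsilon> \<longrightarrow>
             real k \<ge> c * (real n)\<^sup>2 / \<eta> * real B * ln (1/\<epsilon>)))"
proof (rule exI[of _ "1/(8*pi^2)"], rule conjI)
  show "0 < 1/(8*pi^2)" by simp
next
  show "\<exists>n0::nat. \<forall>n B (\<eta>::real) (\<epsilon>::real).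
     n \<ge> n0 \<and> B \<ge> 1 \<and> 0 < \<eta> \<and> \<eta> < 1/2 \<and> 0 < \<epsilon> \<and> \<epsilon> < 1 \<longrightarrow>
     (\<exists>(A::nat \<Rightarrow> nat \<Rightarrow> nat \<Rightarrow> real) (x0::nat \<Rightarrow> real).
        (\<forall>k. doubly_stochastic n (A k) \<and> (\<forall>i<n. A k i i > 0) \<and>
             (\<forall>i<n. \<forall>j<n. A k i j > 0 \<longrightarrow> A k i j \<ge> \<eta>)) \<and>
        (\<forall>k. strongly_connected n (\<Union>t\<in>{k*B..<(k+1)*B}. edges n (A t))) \<and>
        (\<forall>k. V n (traj n A x0 k) / V n x0 \<le> \<epsilon> \<longrightarrow>
             real k \<ge> 1/(8*pi^2) * (real n)\<^sup>2 / \<eta> * real B * ln (1/\<epsilon>)))"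
  proof (rule exI[of _ 9], intro allI impI)
  fix n B :: nat and \<eta> \<epsilon> :: real
  assume H: "9 \<le> n \<and> 1 \<le> B \<and> 0 < \<eta> \<and> \<eta> < 1/2 \<and> 0 < \<epsilon> \<and> \<epsilon> < 1"
  then have n: "n \<ge> 9" and n3: "n \<ge> 3" and B: "B \<ge> 1" and e: "0 < \<eta>" "\<eta> < 1/2" and ep: "0 < \<epsilon>" "\<epsilon> < 1"
    by auto
  let ?A = "Am n B \<eta>" and ?x = "\<lambda>i. Re (om n ^ i)"
  show "\<exists>(A::nat \<Rightarrow> nat \<Rightarrow> nat \<Rightarrow> real) (x0::nat \<Rightarrow> real).
        (\<forall>k. doubly_stochastic n (A k) \<and> (\<forall>i<n. A k i i > 0) \<and>
             (\<forall>i<n. \<forall>j<n. A k i j > 0 \<longrightarrow> A k i j \<ge> \<eta>)) \<and>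
        (\<forall>k. strongly_connected n (\<Union>t\<in>{k*B..<(k+1)*B}. edges n (A t))) \<and>
        (\<forall>k. V n (traj n A x0 k) / V n x0 \<le> \<epsilon> \<longrightarrow>
             real k \<ge> 1/(8*pi^2) * (real n)\<^sup>2 / \<eta> * real B * ln (1/\<epsilon>))"
  proof -
  have P1: "\<forall>k. doubly_stochastic n (?A k) \<and> (\<forall>i<n. ?A k i i > 0) \<and>
             (\<forall>i<n. \<forall>j<n. ?A k i j > 0 \<longrightarrow> ?A k i j \<ge> \<eta>)"
  proof
    fix k
    show "doubly_stochastic n (?A k) \<and> (\<forall>i<n. ?A k i i > 0) \<and>
             (\<forall>i<n. \<forall>j<n. ?A k i j > 0 \<longrightarrow> ?A k i j \<ge> \<eta>)"
      using Mx_good[OF n3 e] Idm_good[OF e(2)] by (simp add: Am_def)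
  qed
  have P2: "\<forall>k. strongly_connected n (\<Union>t\<in>{k*B..<(k+1)*B}. edges n (?A t))"
  proof
    fix k
    let ?t = "k*B + (B - 1)"
    have t: "?t \<in> {k*B..<(k+1)*B}" using B by auto
    have "?t = (B - 1) + k * B" by (simp only: add.commute)
    then have "?t mod B = (B - 1) mod B" by (simp only: mod_mult_self1)
    also have "\<dots> = B - 1" using B by simp
    finally have "?t mod B = B - 1" .
    then have "edges n (?A ?t) = edges n (Mx n \<eta>)" by (simp add: Am_def)
    then have sub: "edges n (Mx n \<eta>) \<subseteq> (\<Union>t\<in>{k*B..<(k+1)*B}. edges n (?A t))" using t by blast
    show "strongly_connected n (\<Union>t\<in>{k*B..<(k+1)*B}. edges n (?A t))"
      using Mx_sc[OF n3 e] rtrancl_mono[OF sub] unfolding strongly_connected_def by blast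
  qed
  have P3: "\<forall>k. V n (traj n ?A ?x k) / V n ?x \<le> \<epsilon> \<longrightarrow>
             real k \<ge> 1/(8*pi^2) * (real n)\<^sup>2 / \<eta> * real B * ln (1/\<epsilon>)"
  proof (intro allI impI)
    fix k
    assume R: "V n (traj n ?A ?x k) / V n ?x \<le> \<epsilon>"
    let ?m = "k div B"
    have V0: "V n ?x = real n / 2"
      using V_wave[OF n3, of ?x 1] by simp
    have Vk: "V n (traj n ?A ?x k) = real n * (cmod (mu n \<eta> ^ ?m))^2 / 2"
      using V_wave[OF n3, of "traj n ?A ?x k" "mu n \<eta> ^ ?m"] traj_wave[OF n3 B, of \<eta> k] by simp
    have "(cmod (mu n \<eta> ^ ?m))^2 = ((cmod (mu n \<eta>))^2)^?m"
      by (simp only: norm_power power_mult[symmetric] mult.commute)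
    also have "\<dots> = (1 - 2*\<eta>*(1-\<eta>)*(1 - cos (2*pi/n)))^?m" by (simp add: mu_norm)
    finally have cq: "(cmod (mu n \<eta> ^ ?m))^2 = (1 - 2*\<eta>*(1-\<eta>)*(1 - cos (2*pi/n)))^?m" .
    have "(1 - 2*\<eta>*(1-\<eta>)*(1 - cos (2*pi/n)))^?m \<le> \<epsilon>"
    proof -
      have nz: "real n \<noteq> 0" using n by simp
      have "V n (traj n ?A ?x k) / V n ?x = (cmod (mu n \<eta> ^ ?m))^2"
        unfolding V0 Vk using nz by simp
      then show ?thesis using R cq by simp
    qed
    moreover have "0 \<le> 2*\<eta>*(1-\<eta>)*(1 - cos (2*pi/n))" using e by simp
    moreover have "2*\<eta>*(1-\<eta>)*(1 - cos (2*pi/n)) \<le> 4*pi^2*\<eta>/(real n)^2"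
    proof -
      have c: "1 - cos (2*pi/n) \<le> (2*pi/n)^2/2" by (rule one_minus_cos)
      have "2*\<eta>*(1-\<eta>)*(1 - cos (2*pi/n)) \<le> 2*\<eta>*(1 - cos (2*pi/n))"
        using e by (intro mult_right_mono) auto
      also have "\<dots> \<le> 2*\<eta>*((2*pi/n)^2/2)" using c e by (intro mult_left_mono) auto
      also have "\<dots> = 4*pi^2*\<eta>/(real n)^2" by (simp add: power_divide)
      finally show ?thesis .
    qed
    moreover have "B * ?m \<le> k" by simp
    ultimately show "real k \<ge> 1/(8*pi^2) * (real n)\<^sup>2 / \<eta> * real B * ln (1/\<epsilon>)"
      by (intro final_ineq[OF _ _ n e ep]) 
  qed
  show ?thesis using P1 P2 P3 by blast
  qed
  qed
qed

end
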